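(* Let $(X,d)$ be a metric space and let $u,u_1,u_2,\ldots\in F_{USC}(X)$. If $H_{\rm end}(u_n,u)\to0$, then $H([u_n]_\alpha,[u]_\alpha)\to0$ for each $\alpha\in(0,1)\setminus P_0(u)$.
   Context: A fuzzy set on $X$ is a function $u:X\to[0,1]$, with $\alpha$-cuts $[u]_\alpha=\{x: u(x)\ge\alpha\}$ for $\alpha\in(0,1]$ and $[u]_0=\overline{\{u>0\}}$. $F_{USC}(X)$ is the set of fuzzy sets with all $\alpha$-cuts ($\alpha\in[0,1]$) non-empty and closed. For non-empty closed sets $U,V$ in a metric space $(Y,\rho)$, $H(U,V)=\max\{\sup_{a\in U}\inf_{b\in V}\rho(a,b),\sup_{b\in V}\inf_{a\in U}\rho(a,b)\}$. $X\times[0,1]$ is metrized by $\overline{d}((x,\alpha),(y,\beta))=d(x,y)+|\alpha-\beta|$, ${\rm end}\,u=\{(x,t)\in X\times[0,1]: u(x)\ge t\}$, $H_{\rm end}(u,v)=H({\rm end}\,u,{\rm end}\,v)$. $P_0(u)=\{\alpha\in(0,1): \lim_{\beta\to\alpha}H([u]_\beta,[u]_\alpha)\neq0\}$, i.e. the set of $\alpha\in(0,1)$ at which it is not the case that $H([u]_\beta,[u]_\alpha)\to0$ as $\beta\to\alpha$. *)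

theory Defs
  imports "HOL-Analysis.Analysis"
begin

definition hausdorff_with :: "('b \<Rightarrow> 'b \<Rightarrow> real) \<Rightarrow> 'b set \<Rightarrow> 'b set \<Rightarrow> ereal" where
  "hausdorff_with rho U V =
     max (SUP a\<in>U. INF b\<in>V. ereal (rho a b)) (SUP b\<in>V. INF a\<in>U. ereal (rho a b))"

definition hausdorff_H :: "'a::metric_space set \<Rightarrow> 'a set \<Rightarrow> ereal" where
  "hausdorff_H U V = hausdorff_with dist U V"

definition cut :: "('a::metric_space \<Rightarrow> real) \<Rightarrow> real \<Rightarrow> 'a set" where
  "cut u \<alpha> = (if \<alpha> = 0 then closure {x. u x > 0} else {x. u x \<ge> \<alpha>})"

definition FUSC :: "('a::metric_space \<Rightarrow> real) set" where
  "FUSC = {u. (\<forall>x. 0 \<le> u x \<and> u x \<le> 1) \<and>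
              (\<forall>\<alpha>\<in>{0..1}. cut u \<alpha> \<noteq> {} \<and> closed (cut u \<alpha>))}"

definition dbar :: "('a::metric_space \<times> real) \<Rightarrow> ('a \<times> real) \<Rightarrow> real" where
  "dbar p q = dist (fst p) (fst q) + \<bar>snd p - snd q\<bar>"

definition endo :: "('a::metric_space \<Rightarrow> real) \<Rightarrow> ('a \<times> real) set" where
  "endo u = {(x, t). t \<in> {0..1} \<and> u x \<ge> t}"

definition H_end :: "('a::metric_space \<Rightarrow> real) \<Rightarrow> ('a \<Rightarrow> real) \<Rightarrow> ereal" where
  "H_end u v = hausdorff_with dbar (endo u) (endo v)"

definition P0 :: "('a::metric_space \<Rightarrow> real) \<Rightarrow> real set" where
  "P0 u = {\<alpha>\<in>{0<..<1}. \<not> ((\<lambda>\<beta>. hausdorff_H (cut u \<beta>) (cut u \<alpha>)) \<longlongrightarrow> 0) (at \<alpha>)}"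

end

theory Submission
  imports Defs
begin

lemma haus_use:
  assumes "hausdorff_with rho U V < ereal e"
  shows "(\<forall>a\<in>U. \<exists>b\<in>V. rho a b < e) \<and> (\<forall>b\<in>V. \<exists>a\<in>U. rho a b < e)"
proof -
  have 1: "(SUP a\<in>U. INF b\<in>V. ereal (rho a b)) < ereal e"
   and 2: "(SUP b\<in>V. INF a\<in>U. ereal (rho a b)) < ereal e"
    using assms unfolding hausdorff_with_def by auto
  have "\<forall>a\<in>U. \<exists>b\<in>V. rho a b < e"
  proof
    fix a assume "a \<in> U"
    then have "(INF b\<in>V. ereal (rho a b)) < ereal e"
      using 1 by (meson SUP_upper le_less_trans)
    then show "\<exists>b\<in>V. rho a b < e" by (auto simp: INF_less_iff)
  qed
  moreover have "\<forall>b\<in>V. \<exists>a\<in>U. rho a b < e"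
  proof
    fix b assume "b \<in> V"
    then have "(INF a\<in>U. ereal (rho a b)) < ereal e"
      using 2 by (meson SUP_upper le_less_trans)
    then show "\<exists>a\<in>U. rho a b < e" by (auto simp: INF_less_iff)
  qed
  ultimately show ?thesis by blast
qed

lemma haus_bound:
  assumes "\<forall>a\<in>U. \<exists>b\<in>V. rho a b \<le> e" "\<forall>b\<in>V. \<exists>a\<in>U. rho a b \<le> e"
  shows "hausdorff_with rho U V \<le> ereal e"
proof -
  have "(SUP a\<in>U. INF b\<in>V. ereal (rho a b)) \<le> ereal e"
  proof (rule SUP_least)
    fix a assume "a \<in> U"
    then obtain b where "b \<in> V" "rho a b \<le> e" using assms(1) by blast
    then show "(INF b\<in>V. ereal (rho a b)) \<le> ereal e" by (meson INF_lower2 ereal_less_eq(3))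
  qed
  moreover have "(SUP b\<in>V. INF a\<in>U. ereal (rho a b)) \<le> ereal e"
  proof (rule SUP_least)
    fix b assume "b \<in> V"
    then obtain a where "a \<in> U" "rho a b \<le> e" using assms(2) by blast
    then show "(INF a\<in>U. ereal (rho a b)) \<le> ereal e" by (meson INF_lower2 ereal_less_eq(3))
  qed
  ultimately show ?thesis unfolding hausdorff_with_def by auto
qed

lemma haus_nonneg:
  assumes "a0 \<in> U" "\<And>a b. rho a b \<ge> 0"
  shows "hausdorff_with rho U V \<ge> 0"
proof -
  have "(INF b\<in>V. ereal (rho a0 b)) \<ge> 0"
    by (rule INF_greatest) (use assms(2) in auto)
  also have "\<dots> \<le> (SUP a\<in>U. INF b\<in>V. ereal (rho a b))"
    using assms(1) by (rule SUP_upper)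
  finally show ?thesis unfolding hausdorff_with_def by (simp add: le_max_iff_disj)
qed

lemma tendsto0_crit:
  fixes f :: "nat \<Rightarrow> ereal"
  assumes "\<And>n. f n \<ge> 0" "\<And>e. e > 0 \<Longrightarrow> eventually (\<lambda>n. f n \<le> ereal e) sequentially"
  shows "f \<longlonglongrightarrow> 0"
proof (rule order_tendstoI)
  fix l :: ereal assume "l < 0"
  then show "eventually (\<lambda>n. l < f n) sequentially" using assms(1)
    by (meson always_eventually less_le_trans)
next
  fix r :: ereal assume r: "r > 0"
  show "eventually (\<lambda>n. f n < r) sequentially"
  proof (cases r)
    case (real x)
    then have "x > 0" using r by auto
    then have "eventually (\<lambda>n. f n \<le> ereal (x/2)) sequentially" using assms(2) by auto
    then show ?thesis
    proof eventually_elim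
      case (elim n)
      have "ereal (x/2) < ereal x" using \<open>x>0\<close> by simp
      then show ?case using elim real by (meson le_less_trans)
    qed
  next
    case PInf
    have "eventually (\<lambda>n. f n \<le> ereal 1) sequentially" using assms(2) by auto
    then show ?thesis by eventually_elim (use PInf in auto)
  next
    case MInf then show ?thesis using r by auto
  qed
qed

theorem theorem4p5:
  fixes u :: "'a::metric_space \<Rightarrow> real" and us :: "nat \<Rightarrow> 'a \<Rightarrow> real" and \<alpha> :: real
  assumes "u \<in> FUSC" and "\<And>n. us n \<in> FUSC"
    and "(\<lambda>n. H_end (us n) u) \<longlonglongrightarrow> 0"
    and "\<alpha> \<in> {0<..<1}" and "\<alpha> \<notin> P0 u"
  shows "(\<lambda>n. hausdorff_H (cut (us n) \<alpha>) (cut u \<alpha>)) \<longlonglongrightarrow> 0"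
proof (rule tendsto0_crit)
  have a0: "\<alpha> \<noteq> 0" "0 < \<alpha>" "\<alpha> < 1" using assms(4) by auto
  have cutA: "\<And>v. cut v \<alpha> = {x. v x \<ge> \<alpha>}" using a0 by (simp add: cut_def)
  fix n
  have "cut (us n) \<alpha> \<noteq> {}" using assms(2)[of n] a0 unfolding FUSC_def by auto
  then obtain a0 where "a0 \<in> cut (us n) \<alpha>" by blast
  then show "hausdorff_H (cut (us n) \<alpha>) (cut u \<alpha>) \<ge> 0"
    unfolding hausdorff_H_def by (rule haus_nonneg) auto
next
  have a0: "\<alpha> \<noteq> 0" "0 < \<alpha>" "\<alpha> < 1" using assms(4) by auto
  have cutA: "\<And>v b. b \<noteq> 0 \<Longrightarrow> cut v b = {x. v x \<ge> b}" by (simp add: cut_def)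
  fix e :: real assume e: "e > 0"
  define e' where "e' = e/3"
  have e': "e' > 0" using e by (simp add: e'_def)
  have cont: "((\<lambda>\<beta>. hausdorff_H (cut u \<beta>) (cut u \<alpha>)) \<longlongrightarrow> 0) (at \<alpha>)"
    using assms(4,5) unfolding P0_def by auto
  then have "eventually (\<lambda>\<beta>. hausdorff_H (cut u \<beta>) (cut u \<alpha>) < ereal e') (at \<alpha>)"
    using e' by (intro order_tendstoD(2)) auto
  then obtain d where d: "d > 0"
    and dH: "\<And>\<beta>. \<beta> \<noteq> \<alpha> \<Longrightarrow> dist \<beta> \<alpha> < d \<Longrightarrow> hausdorff_H (cut u \<beta>) (cut u \<alpha>) < ereal e'"
    unfolding eventually_at by auto
  define \<delta> where "\<delta> = min (min (d/2) e') (min ((1-\<alpha>)/2) (\<alpha>/2))"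
  have dp: "\<delta> > 0" using d e' a0 by (simp add: \<delta>_def)
  have dle: "\<delta> \<le> d/2" "\<delta> \<le> e'" "\<delta> \<le> (1-\<alpha>)/2" "\<delta> \<le> \<alpha>/2" unfolding \<delta>_def by linarith+
  have Hlow: "hausdorff_H (cut u (\<alpha>-\<delta>)) (cut u \<alpha>) < ereal e'"
    using dH[of "\<alpha>-\<delta>"] dp dle d by (auto simp: dist_real_def)
  have Hhigh: "hausdorff_H (cut u (\<alpha>+\<delta>)) (cut u \<alpha>) < ereal e'"
    using dH[of "\<alpha>+\<delta>"] dp dle d by (auto simp: dist_real_def)
  have low: "\<forall>y\<in>cut u (\<alpha>-\<delta>). \<exists>z\<in>cut u \<alpha>. dist y z < e'"
    using haus_use[OF Hlow[unfolded hausdorff_H_def]] by blast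
  have high: "\<forall>y\<in>cut u \<alpha>. \<exists>z\<in>cut u (\<alpha>+\<delta>). dist z y < e'"
    using haus_use[OF Hhigh[unfolded hausdorff_H_def]] by blast
  have "eventually (\<lambda>n. H_end (us n) u < ereal \<delta>) sequentially"
    using assms(3) dp by (intro order_tendstoD(2)) auto
  then show "eventually (\<lambda>n. hausdorff_H (cut (us n) \<alpha>) (cut u \<alpha>) \<le> ereal e) sequentially"
  proof eventually_elim
    case (elim n)
    note HE = haus_use[OF elim[unfolded H_end_def]]
    show ?case unfolding hausdorff_H_def
    proof (rule haus_bound; intro ballI)
      fix x assume x: "x \<in> cut (us n) \<alpha>"
      then have "(x, \<alpha>) \<in> endo (us n)" using a0 cutA[of \<alpha> "us n"] by (auto simp: endo_def)
      then obtain p where p: "p \<in> endo u" "dbar (x, \<alpha>) p < \<delta>" using HE by blast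
      obtain y t where yt: "p = (y, t)" by (cases p)
      have "u y \<ge> t" "dist x y + \<bar>\<alpha> - t\<bar> < \<delta>" using p yt by (auto simp: endo_def dbar_def)
      moreover have "\<alpha> - \<delta> \<noteq> 0" using dle a0 dp by linarith
      moreover have "\<bar>\<alpha> - t\<bar> < \<delta>" "dist x y < \<delta>" using calculation(2) zero_le_dist[of x y] by linarith+
      ultimately have "y \<in> cut u (\<alpha>-\<delta>)" "dist x y < \<delta>" using cutA[of "\<alpha>-\<delta>" u] by auto
      then obtain z where zz: "z \<in> cut u \<alpha>" "dist y z < e'" using low by blast
      have "dist x z \<le> dist x y + dist y z" by (rule dist_triangle)
      with zz show "\<exists>b\<in>cut u \<alpha>. dist x b \<le> e"
      proof (intro bexI[of _ z])
        show "dist x z \<le> e" using zz \<open>dist x z \<le> dist x y + dist y z\<close> \<open>dist x y < \<delta>\<close> dle e'_def e by linarith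
      qed (rule zz)
    next
      fix y assume y: "y \<in> cut u \<alpha>"
      then obtain z where z: "z \<in> cut u (\<alpha>+\<delta>)" "dist z y < e'" using high by blast
      then have "(z, \<alpha>+\<delta>) \<in> endo u" using cutA[of "\<alpha>+\<delta>" u] dle a0 dp by (auto simp: endo_def)
      then obtain p where p: "p \<in> endo (us n)" "dbar p (z, \<alpha>+\<delta>) < \<delta>" using HE by blast
      obtain w s where ws: "p = (w, s)" by (cases p)
      have "us n w \<ge> s" "dist w z + \<bar>s - (\<alpha>+\<delta>)\<bar> < \<delta>" using p ws by (auto simp: endo_def dbar_def)
      moreover have "\<bar>s - (\<alpha>+\<delta>)\<bar> < \<delta>" "dist w z < \<delta>" using calculation(2) zero_le_dist[of w z] by linarith+
      moreover have "s \<ge> \<alpha>" using calculation(3) by linarith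
      ultimately have ww: "w \<in> cut (us n) \<alpha>" "dist w z < \<delta>" using cutA[of \<alpha> "us n"] a0 by auto
      have tr: "dist w y \<le> dist w z + dist z y" by (rule dist_triangle)
      show "\<exists>a\<in>cut (us n) \<alpha>. dist a y \<le> e"
      proof (intro bexI[of _ w])
        show "dist w y \<le> e" using ww tr z dle e'_def e by linarith
      qed (rule ww)
    qed
  qed
qed

end
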